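(* Let $c>0$ and let $\nu,\tilde\nu$ be probability measures on $\mathbb R_+$ different from $\boldsymbol d_0$. Suppose that for $i=1,2$ the triple $(\boldsymbol{\tilde\delta}_i,\boldsymbol\delta_i,\boldsymbol x_i)$ satisfies: $\boldsymbol{\tilde\delta}_i\in\widetilde{\mathcal D}$, $\boldsymbol x_i\in\mathbb R\setminus\{0\}$, $\boldsymbol\delta_i=c\int\frac{t}{-\boldsymbol x_i(1+\boldsymbol{\tilde\delta}_i t)}\nu(dt)\in\mathcal D$, $\boldsymbol{\tilde\delta}_i=\int\frac{t}{-\boldsymbol x_i(1+\boldsymbol\delta_i t)}\tilde\nu(dt)$, and $$1-\boldsymbol x_i^2\Bigl(c\int\frac{t^2}{\boldsymbol x_i^2(1+\boldsymbol{\tilde\delta}_i t)^2}\nu(dt)\Bigr)\Bigl(\int\frac{t^2}{\boldsymbol x_i^2(1+\boldsymbol\delta_i t)^2}\tilde\nu(dt)\Bigr)>0.$$ Then $\boldsymbol{\tilde\delta}_1\neq\boldsymbol{\tilde\delta}_2\Rightarrow\boldsymbol x_1\neq\boldsymbol x_2$, and $\boldsymbol\delta_1\neq\boldsymbol\delta_2\Rightarrow\boldsymbol x_1\neq\boldsymbol x_2$.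
   Context: $\boldsymbol d_0$ is the Dirac mass at $0$. Define $\mathcal D=\{0\}\cup\{\boldsymbol\delta\in\mathbb R\setminus\{0\}:-\boldsymbol\delta^{-1}\notin\operatorname{supp}(\tilde\nu)\}$ if $\operatorname{supp}(\tilde\nu)$ is compact and $\mathcal D=\{\boldsymbol\delta\in\mathbb R\setminus\{0\}:-\boldsymbol\delta^{-1}\notin\operatorname{supp}(\tilde\nu)\}$ otherwise; $\widetilde{\mathcal D}$ is defined in the same way with $\nu$ in place of $\tilde\nu$. *)

theory Defs
  imports "HOL-Probability.Probability"
begin

definition msupp :: "real measure \<Rightarrow> real set" where
  "msupp M = {x. \<forall>e>0. emeasure M (ball x e) > 0}"

text \<open>The set D built from a measure mu (D uses nu-tilde, D-tilde uses nu).\<close>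
definition Dset :: "real measure \<Rightarrow> real set" where
  "Dset mu = (if compact (msupp mu) then {0} else {}) \<union>
             {d. d \<noteq> 0 \<and> - inverse d \<notin> msupp mu}"

definition prob_Rplus_nondirac :: "real measure \<Rightarrow> bool" where
  "prob_Rplus_nondirac M \<longleftrightarrow> prob_space M \<and> sets M = sets borel \<and>
     emeasure M {..<0} = 0 \<and> M \<noteq> return borel 0"

end

theory Submission
  imports Defs
begin

lemma supp_AE:
  fixes M :: "real measure"
  assumes sM: "sets M = sets borel"
  shows "AE t in M. t \<in> msupp M"
proof -
  define F where "F = {ball y e | y e. e > 0 \<and> emeasure M (ball y e) = 0}"
  have "\<And>S. S \<in> F \<Longrightarrow> open S" unfolding F_def by auto
  then obtain F' where F': "F' \<subseteq> F" "countable F'" "\<Union>F' = \<Union>F" by (rule Lindelof)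
  have N: "\<Union>F' \<in> null_sets M"
  proof -
    have "(\<Union>S\<in>F'. id S) \<in> null_sets M"
    proof (rule null_sets_UN'[OF F'(2)])
      fix S assume "S \<in> F'"
      then have "S \<in> F" using F' by auto
      then obtain y e where S: "S = ball y e" and me: "emeasure M (ball y e) = 0"
        unfolding F_def by blast
      have "S \<in> sets M" unfolding sM S by (rule borel_open) simp
      then show "id S \<in> null_sets M" using me S by (simp add: null_setsI)
    qed
    then show ?thesis by simp
  qed
  show ?thesis
  proof (rule AE_I'[OF N])
    show "{t \<in> space M. t \<notin> msupp M} \<subseteq> \<Union>F'"
    proof
      fix t assume "t \<in> {t \<in> space M. t \<notin> msupp M}"
      then obtain e where "e > 0" "\<not> emeasure M (ball t e) > 0" unfolding msupp_def by auto
      then have "ball t e \<in> F" unfolding F_def by (auto simp: zero_less_iff_neq_zero)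
      moreover have "t \<in> ball t e" using \<open>e>0\<close> by simp
      ultimately show "t \<in> \<Union>F'" using F'(3) by blast
    qed
  qed
qed

lemma bound_AE:
  fixes M :: "real measure"
  assumes sM: "sets M = sets borel" and neg: "emeasure M {..<0} = 0"
    and a: "a \<in> Dset M"
  shows "\<exists>K. AE t in M. t \<ge> 0 \<and> 1 + a * t \<noteq> 0 \<and> \<bar>t / (1 + a * t)\<bar> \<le> K"
proof -
  have pos: "AE t in M. t \<ge> 0"
  proof (rule AE_I'[of "{..<0}"])
    show "{..<0} \<in> null_sets M" using neg sM by (auto simp: null_sets_def)
  qed auto
  consider "a = 0" "compact (msupp M)" | "a > 0" | "a < 0" "- inverse a \<notin> msupp M"
    using a unfolding Dset_def by (cases "a = 0"; cases "a > 0") (auto split: if_splits)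
  then show ?thesis
  proof cases
    case 1
    have "bounded (msupp M)" using 1(2) by (rule compact_imp_bounded)
    then obtain R where R: "\<forall>y\<in>msupp M. \<bar>y\<bar> \<le> R"
      unfolding bounded_real by blast
    have "AE t in M. t \<ge> 0 \<and> 1 + a * t \<noteq> 0 \<and> \<bar>t / (1 + a * t)\<bar> \<le> R"
      using supp_AE[OF sM] pos
    proof eventually_elim
      case (elim t)
      then show ?case using R 1(1) by force
    qed
    then show ?thesis by blast
  next
    case 2
    have "AE t in M. t \<ge> 0 \<and> 1 + a * t \<noteq> 0 \<and> \<bar>t / (1 + a * t)\<bar> \<le> 1 / a"
      using pos
    proof eventually_elim
      case (elim t)
      have "0 < 1 + a * t" using 2 elim by (simp add: add_pos_nonneg)
      moreover have "t / (1 + a*t) \<le> 1 / a" using 2 elim \<open>0 < 1 + a * t\<close>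
        by (simp add: divide_simps)
      ultimately show ?case using elim by simp
    qed
    then show ?thesis by blast
  next
    case 3
    define p where "p = - inverse a"
    have p0: "p > 0" using 3 by (simp add: p_def)
    obtain e where e: "e > 0" "emeasure M (ball p e) = 0"
      using 3(2) unfolding msupp_def p_def by (auto simp: not_less)
    have away: "AE t in M. t \<notin> ball p e"
      by (rule AE_I'[of "ball p e"]) (use e sM in \<open>auto simp: null_sets_def\<close>)
    have "AE t in M. t \<ge> 0 \<and> 1 + a * t \<noteq> 0 \<and> \<bar>t / (1 + a * t)\<bar> \<le> 1 / \<bar>a\<bar> + p / (\<bar>a\<bar> * e)"
      using pos away
    proof eventually_elim
      case (elim t)
      have de: "e \<le> \<bar>t - p\<bar>" using elim by (auto simp: dist_real_def)
      have eq: "1 + a * t = a * (t - p)" using 3 by (simp add: p_def field_simps)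
      have nz: "1 + a * t \<noteq> 0" using eq 3 de e by auto
      have "\<bar>t / (1 + a * t)\<bar> = \<bar>t\<bar> / (\<bar>a\<bar> * \<bar>t - p\<bar>)" by (simp add: eq abs_mult)
      also have "\<dots> \<le> (\<bar>t - p\<bar> + p) / (\<bar>a\<bar> * \<bar>t - p\<bar>)"
        apply (rule divide_right_mono)
        subgoal using abs_triangle_ineq[of "t - p" p] p0 by simp
        subgoal by simp
        done
      also have "\<dots> = 1 / \<bar>a\<bar> + p / (\<bar>a\<bar> * \<bar>t - p\<bar>)"
      proof -
        have tp: "\<bar>t - p\<bar> \<noteq> 0" using de e by linarith
        have a0: "\<bar>a\<bar> \<noteq> 0" using 3 by simp
        show ?thesis using tp a0 by (simp add: field_simps)
      qed
      also have "\<dots> \<le> 1 / \<bar>a\<bar> + p / (\<bar>a\<bar> * e)"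
      proof -
        have "\<bar>a\<bar> * e \<le> \<bar>a\<bar> * \<bar>t - p\<bar>" using de by (simp add: mult_left_mono)
        moreover have "0 < \<bar>a\<bar> * e" using 3 e by (intro mult_pos_pos) auto
        ultimately have "p / (\<bar>a\<bar> * \<bar>t - p\<bar>) \<le> p / (\<bar>a\<bar> * e)"
          using p0 by (intro divide_left_mono) auto
        then show ?thesis by simp
      qed
      finally show ?case using nz elim by simp
    qed
    then show ?thesis by blast
  qed
qed

lemma quad_disc:
  fixes P Q R :: real
  assumes "\<And>l. 0 \<le> P + 2 * l * Q + l * l * R" and R0: "R \<ge> 0"
  shows "Q * Q \<le> P * R"
proof (cases "R = 0")
  case True
  have h: "0 \<le> P + 2 * l * Q" for l using assms(1)[of l] True by simp
  have "Q = 0"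
  proof (rule ccontr)
    assume "Q \<noteq> 0"
    have "0 \<le> P + 2 * (- (\<bar>P\<bar> + 1) / Q) * Q" by (rule h)
    also have "\<dots> = P - 2 * (\<bar>P\<bar> + 1)" using \<open>Q \<noteq> 0\<close> by (simp add: field_simps)
    finally show False by (smt (verit))
  qed
  then show ?thesis using True by simp
next
  case False
  have Rp: "R > 0" using False R0 by simp
  have "0 \<le> P + 2 * (- Q / R) * Q + (- Q / R) * (- Q / R) * R" by (rule assms(1))
  also have "\<dots> = P - Q * Q / R" using Rp by (simp add: field_simps)
  finally have "Q * Q / R \<le> P" by simp
  then show ?thesis using Rp by (simp add: field_simps mult.commute)
qed

lemma CS_int:
  fixes f g :: "'a \<Rightarrow> real"
  assumes ff: "integrable M (\<lambda>t. f t * f t)" and gg: "integrable M (\<lambda>t. g t * g t)"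
    and fg: "integrable M (\<lambda>t. f t * g t)"
  shows "(\<integral>t. f t * g t \<partial>M) * (\<integral>t. f t * g t \<partial>M)
     \<le> (\<integral>t. f t * f t \<partial>M) * (\<integral>t. g t * g t \<partial>M)"
proof (rule quad_disc)
  fix l :: real
  have "0 \<le> (\<integral>t. (f t + l * g t) * (f t + l * g t) \<partial>M)" by simp
  also have "(\<integral>t. (f t + l * g t) * (f t + l * g t) \<partial>M)
     = (\<integral>t. f t * f t + (2 * l) * (f t * g t) + (l * l) * (g t * g t) \<partial>M)"
    by (rule Bochner_Integration.integral_cong) (simp_all add: algebra_simps)
  also have "\<dots> = (\<integral>t. f t * f t \<partial>M) + 2 * l * (\<integral>t. f t * g t \<partial>M) + l * l * (\<integral>t. g t * g t \<partial>M)"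
    using ff gg fg by simp
  finally show "0 \<le> (\<integral>t. f t * f t \<partial>M) + 2 * l * (\<integral>t. f t * g t \<partial>M) + l * l * (\<integral>t. g t * g t \<partial>M)" .
next
  show "0 \<le> (\<integral>t. g t * g t \<partial>M)" by simp
qed

lemma meas_facts:
  fixes M :: "real measure"
  assumes M: "prob_Rplus_nondirac M" and a: "a \<in> Dset M" and b: "b \<in> Dset M"
  shows "integrable M (\<lambda>t. t / (1 + a * t) * (t / (1 + b * t)))"
    and "(\<integral>t. t / (1 + a * t) \<partial>M) - (\<integral>t. t / (1 + b * t) \<partial>M)
         = (b - a) * (\<integral>t. t / (1 + a * t) * (t / (1 + b * t)) \<partial>M)"
proof -
  have ps: "prob_space M" and sM: "sets M = sets borel" and neg: "emeasure M {..<0} = 0"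
    using M unfolding prob_Rplus_nondirac_def by auto
  interpret prob_space M by (rule ps)
  obtain Ka where Ka: "AE t in M. t \<ge> 0 \<and> 1 + a * t \<noteq> 0 \<and> \<bar>t / (1 + a * t)\<bar> \<le> Ka"
    using bound_AE[OF sM neg a] by blast
  obtain Kb where Kb: "AE t in M. t \<ge> 0 \<and> 1 + b * t \<noteq> 0 \<and> \<bar>t / (1 + b * t)\<bar> \<le> Kb"
    using bound_AE[OF sM neg b] by blast
  have ma: "(\<lambda>t. t / (1 + a * t)) \<in> borel_measurable M"
    unfolding measurable_cong_sets[OF sM refl] by measurable
  have mb: "(\<lambda>t. t / (1 + b * t)) \<in> borel_measurable M"
    unfolding measurable_cong_sets[OF sM refl] by measurable
  have ia: "integrable M (\<lambda>t. t / (1 + a * t))"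
    by (rule integrable_const_bound[where B=Ka]) (use Ka ma in auto)
  have ib: "integrable M (\<lambda>t. t / (1 + b * t))"
    by (rule integrable_const_bound[where B=Kb]) (use Kb mb in auto)
  show iab: "integrable M (\<lambda>t. t / (1 + a * t) * (t / (1 + b * t)))"
  proof (rule integrable_const_bound[where B="Ka * Kb"])
    show "AE t in M. norm (t / (1 + a * t) * (t / (1 + b * t))) \<le> Ka * Kb"
      using Ka Kb
    proof eventually_elim
      case (elim t)
      then have "\<bar>t / (1 + a * t)\<bar> \<le> Ka" "\<bar>t / (1 + b * t)\<bar> \<le> Kb" by auto
      moreover have "0 \<le> Ka" using calculation(1) by (rule order_trans[OF abs_ge_zero])
      ultimately have "\<bar>t / (1 + a * t)\<bar> * \<bar>t / (1 + b * t)\<bar> \<le> Ka * Kb"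
        by (intro mult_mono) auto
      then show ?case by (simp only: real_norm_def abs_mult)
    qed
    show "(\<lambda>t. t / (1 + a * t) * (t / (1 + b * t))) \<in> borel_measurable M"
      using ma mb by measurable
  qed
  have "(\<integral>t. t / (1 + a * t) \<partial>M) - (\<integral>t. t / (1 + b * t) \<partial>M)
      = (\<integral>t. t / (1 + a * t) - t / (1 + b * t) \<partial>M)"
    using ia ib by simp
  also have "\<dots> = (\<integral>t. (b - a) * (t / (1 + a * t) * (t / (1 + b * t))) \<partial>M)"
  proof (rule integral_cong_AE)
    show "AE t in M. t / (1 + a * t) - t / (1 + b * t) = (b - a) * (t / (1 + a * t) * (t / (1 + b * t)))"
      using Ka Kb
    proof eventually_elim
      case (elim t)
      then show ?case by (simp add: field_simps)
    qed
  qed (rule borel_measurable_integrable, rule Bochner_Integration.integrable_diff[OF ia ib],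
       rule borel_measurable_integrable, rule integrable_mult_right[OF iab])
  also have "\<dots> = (b - a) * (\<integral>t. t / (1 + a * t) * (t / (1 + b * t)) \<partial>M)"
    by (rule integral_mult_right_zero)
  finally show "(\<integral>t. t / (1 + a * t) \<partial>M) - (\<integral>t. t / (1 + b * t) \<partial>M)
         = (b - a) * (\<integral>t. t / (1 + a * t) * (t / (1 + b * t)) \<partial>M)" .
qed

theorem lemma3p8:
  fixes c :: real and nu nut :: "real measure"
    and dt d x :: "nat \<Rightarrow> real"
  assumes c: "c > 0"
    and nu: "prob_Rplus_nondirac nu" and nut: "prob_Rplus_nondirac nut"
    and hyp: "\<And>i. i \<in> {1, 2} \<Longrightarrow>
        dt i \<in> Dset nu \<and> x i \<noteq> 0 \<and>
        d i = c * (\<integral>t. t / (- x i * (1 + dt i * t)) \<partial>nu) \<and> d i \<in> Dset nut \<and>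
        dt i = (\<integral>t. t / (- x i * (1 + d i * t)) \<partial>nut) \<and>
        1 - (x i)\<^sup>2 * (c * (\<integral>t. t\<^sup>2 / ((x i)\<^sup>2 * (1 + dt i * t)\<^sup>2) \<partial>nu))
              * (\<integral>t. t\<^sup>2 / ((x i)\<^sup>2 * (1 + d i * t)\<^sup>2) \<partial>nut) > 0"
  shows "(dt 1 \<noteq> dt 2 \<longrightarrow> x 1 \<noteq> x 2) \<and> (d 1 \<noteq> d 2 \<longrightarrow> x 1 \<noteq> x 2)"
proof -
  have key: "dt 1 = dt 2" if xe: "x 1 = x 2"
  proof (rule ccontr)
    assume ne: "dt 1 \<noteq> dt 2"
    define X where "X = x 1"
    have h1: "dt 1 \<in> Dset nu \<and> X \<noteq> 0 \<and>
        d 1 = c * (\<integral>t. t / (- X * (1 + dt 1 * t)) \<partial>nu) \<and> d 1 \<in> Dset nut \<and>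
        dt 1 = (\<integral>t. t / (- X * (1 + d 1 * t)) \<partial>nut) \<and>
        1 - X\<^sup>2 * (c * (\<integral>t. t\<^sup>2 / (X\<^sup>2 * (1 + dt 1 * t)\<^sup>2) \<partial>nu))
              * (\<integral>t. t\<^sup>2 / (X\<^sup>2 * (1 + d 1 * t)\<^sup>2) \<partial>nut) > 0"
      unfolding X_def by (rule hyp) simp
    have h2: "dt 2 \<in> Dset nu \<and> X \<noteq> 0 \<and>
        d 2 = c * (\<integral>t. t / (- X * (1 + dt 2 * t)) \<partial>nu) \<and> d 2 \<in> Dset nut \<and>
        dt 2 = (\<integral>t. t / (- X * (1 + d 2 * t)) \<partial>nut) \<and>
        1 - X\<^sup>2 * (c * (\<integral>t. t\<^sup>2 / (X\<^sup>2 * (1 + dt 2 * t)\<^sup>2) \<partial>nu))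
              * (\<integral>t. t\<^sup>2 / (X\<^sup>2 * (1 + d 2 * t)\<^sup>2) \<partial>nut) > 0"
      unfolding X_def xe by (rule hyp) simp
    have X0: "X \<noteq> 0" using h1 by (elim conjE) assumption
    have lin: "(\<integral>t. t / (- X * (1 + a * t)) \<partial>M) = (\<integral>t. t / (1 + a * t) \<partial>M) / (- X)"
      for M :: "real measure" and a
    proof -
      have "(\<lambda>t. t / (- X * (1 + a * t))) = (\<lambda>t. t / (1 + a * t) / (- X))"
        by (simp add: divide_divide_eq_left mult.commute)
      then show ?thesis by (simp only:) (rule integral_divide_zero)
    qed
    have sq: "(\<integral>t. t\<^sup>2 / (X\<^sup>2 * (1 + a * t)\<^sup>2) \<partial>M) = (\<integral>t. t / (1 + a * t) * (t / (1 + a * t)) \<partial>M) / X\<^sup>2"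
      for M :: "real measure" and a
    proof -
      have "(\<lambda>t. t\<^sup>2 / (X\<^sup>2 * (1 + a * t)\<^sup>2)) = (\<lambda>t. t / (1 + a * t) * (t / (1 + a * t)) / X\<^sup>2)"
        by (simp add: power2_eq_square divide_divide_eq_left mult.commute mult.left_commute)
      then show ?thesis by (simp only:) (rule integral_divide_zero)
    qed
    define U1 where "U1 = (\<integral>t. t / (1 + dt 1 * t) \<partial>nu)"
    define U2 where "U2 = (\<integral>t. t / (1 + dt 2 * t) \<partial>nu)"
    define V1 where "V1 = (\<integral>t. t / (1 + d 1 * t) \<partial>nut)"
    define V2 where "V2 = (\<integral>t. t / (1 + d 2 * t) \<partial>nut)"
    define A where "A = (\<integral>t. t / (1 + dt 1 * t) * (t / (1 + dt 2 * t)) \<partial>nu)"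
    define A11 where "A11 = (\<integral>t. t / (1 + dt 1 * t) * (t / (1 + dt 1 * t)) \<partial>nu)"
    define A22 where "A22 = (\<integral>t. t / (1 + dt 2 * t) * (t / (1 + dt 2 * t)) \<partial>nu)"
    define B where "B = (\<integral>t. t / (1 + d 1 * t) * (t / (1 + d 2 * t)) \<partial>nut)"
    define B11 where "B11 = (\<integral>t. t / (1 + d 1 * t) * (t / (1 + d 1 * t)) \<partial>nut)"
    define B22 where "B22 = (\<integral>t. t / (1 + d 2 * t) * (t / (1 + d 2 * t)) \<partial>nut)"
    have e1: "d 1 = c * (U1 / (- X))" proof -
      have q: "d 1 = c * (\<integral>t. t / (- X * (1 + dt 1 * t)) \<partial>nu)" using h1 by (elim conjE) assumption
      show ?thesis unfolding U1_def by (subst q) (simp only: lin)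
    qed
    have e2: "d 2 = c * (U2 / (- X))" proof -
      have q: "d 2 = c * (\<integral>t. t / (- X * (1 + dt 2 * t)) \<partial>nu)" using h2 by (elim conjE) assumption
      show ?thesis unfolding U2_def by (subst q) (simp only: lin)
    qed
    have f1: "dt 1 = V1 / (- X)" proof -
      have q: "dt 1 = (\<integral>t. t / (- X * (1 + d 1 * t)) \<partial>nut)" using h1 by (elim conjE) assumption
      show ?thesis unfolding V1_def by (subst q) (simp only: lin)
    qed
    have f2: "dt 2 = V2 / (- X)" proof -
      have q: "dt 2 = (\<integral>t. t / (- X * (1 + d 2 * t)) \<partial>nut)" using h2 by (elim conjE) assumption
      show ?thesis unfolding V2_def by (subst q) (simp only: lin)
    qed
    have g1: "1 - X\<^sup>2 * (c * (A11 / X\<^sup>2)) * (B11 / X\<^sup>2) > 0"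
    proof -
      have q: "1 - X\<^sup>2 * (c * (\<integral>t. t\<^sup>2 / (X\<^sup>2 * (1 + dt 1 * t)\<^sup>2) \<partial>nu))
              * (\<integral>t. t\<^sup>2 / (X\<^sup>2 * (1 + d 1 * t)\<^sup>2) \<partial>nut) > 0" using h1 by (elim conjE) assumption
      then show ?thesis unfolding A11_def B11_def by (simp only: sq)
    qed
    have g2: "1 - X\<^sup>2 * (c * (A22 / X\<^sup>2)) * (B22 / X\<^sup>2) > 0"
    proof -
      have q: "1 - X\<^sup>2 * (c * (\<integral>t. t\<^sup>2 / (X\<^sup>2 * (1 + dt 2 * t)\<^sup>2) \<partial>nu))
              * (\<integral>t. t\<^sup>2 / (X\<^sup>2 * (1 + d 2 * t)\<^sup>2) \<partial>nut) > 0" using h2 by (elim conjE) assumption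
      then show ?thesis unfolding A22_def B22_def by (simp only: sq)
    qed
    have da1: "dt 1 \<in> Dset nu" using h1 by (elim conjE) assumption
    have da2: "dt 2 \<in> Dset nu" using h2 by (elim conjE) assumption
    have db1: "d 1 \<in> Dset nut" using h1 by (elim conjE) assumption
    have db2: "d 2 \<in> Dset nut" using h2 by (elim conjE) assumption
    note da = da1 da2
    note db = db1 db2
    have UA: "U1 - U2 = (dt 2 - dt 1) * A"
      using meas_facts(2)[OF nu da] unfolding U1_def U2_def A_def by simp
    have VB: "V1 - V2 = (d 2 - d 1) * B"
      using meas_facts(2)[OF nut db] unfolding V1_def V2_def B_def by simp
    have CSA: "A * A \<le> A11 * A22" unfolding A_def A11_def A22_def
      by (rule CS_int) (use meas_facts(1)[OF nu da(1) da(1)] meas_facts(1)[OF nu da(2) da(2)]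
          meas_facts(1)[OF nu da(1) da(2)] in auto)
    have CSB: "B * B \<le> B11 * B22" unfolding B_def B11_def B22_def
      by (rule CS_int) (use meas_facts(1)[OF nut db(1) db(1)] meas_facts(1)[OF nut db(2) db(2)]
          meas_facts(1)[OF nut db(1) db(2)] in auto)
    have nn: "A11 \<ge> 0" "A22 \<ge> 0" "B11 \<ge> 0" "B22 \<ge> 0"
      unfolding A11_def A22_def B11_def B22_def by auto
    have X2: "X\<^sup>2 > 0" using X0 by simp
    have k1: "c * A11 * B11 < X\<^sup>2"
    proof -
      have "X\<^sup>2 * (c * (A11 / X\<^sup>2)) * (B11 / X\<^sup>2) = c * A11 * B11 / X\<^sup>2"
        using X0 by (simp add: field_simps power2_eq_square)
      then have "c * A11 * B11 / X\<^sup>2 < 1" using g1 by linarith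
      then show ?thesis using X2 by (simp add: divide_less_eq)
    qed
    have k2: "c * A22 * B22 < X\<^sup>2"
    proof -
      have "X\<^sup>2 * (c * (A22 / X\<^sup>2)) * (B22 / X\<^sup>2) = c * A22 * B22 / X\<^sup>2"
        using X0 by (simp add: field_simps power2_eq_square)
      then have "c * A22 * B22 / X\<^sup>2 < 1" using g2 by linarith
      then show ?thesis using X2 by (simp add: divide_less_eq)
    qed
    have s1: "d 1 - d 2 = c * (dt 1 - dt 2) * A / X"
    proof -
      have "d 1 - d 2 = c * (U1 / (- X)) - c * (U2 / (- X))" using e1 e2 by simp
      also have "\<dots> = - c * (U1 - U2) / X" using X0 by (simp add: field_simps)
      also have "\<dots> = c * (dt 1 - dt 2) * A / X" unfolding UA by (simp add: algebra_simps)
      finally show ?thesis .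
    qed
    have s2: "dt 1 - dt 2 = (d 1 - d 2) * B / X"
    proof -
      have "dt 1 - dt 2 = V1 / (- X) - V2 / (- X)" using f1 f2 by simp
      also have "\<dots> = - (V1 - V2) / X" using X0 by (simp add: field_simps)
      also have "\<dots> = (d 1 - d 2) * B / X" unfolding VB by (simp add: algebra_simps)
      finally show ?thesis .
    qed
    have "dt 1 - dt 2 = (d 1 - d 2) * B / X" by (rule s2)
    also have "\<dots> = (c * (dt 1 - dt 2) * A / X) * B / X" by (simp only: s1)
    also have "\<dots> = (dt 1 - dt 2) * (c * A * B / X\<^sup>2)"
      using X0 by (simp add: field_simps power2_eq_square)
    finally have "dt 1 - dt 2 = (dt 1 - dt 2) * (c * A * B / X\<^sup>2)" .
    then have s: "dt 1 - dt 2 = (dt 1 - dt 2) * (c * A * B / X\<^sup>2)" .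
    then have s3: "(dt 1 - dt 2) * (c * A * B / X\<^sup>2) = (dt 1 - dt 2) * 1"
      by (subst mult.right_neutral) (rule s[symmetric])
    have ne': "dt 1 - dt 2 \<noteq> 0" using ne by simp
    have one: "c * A * B / X\<^sup>2 = 1" using mult_left_cancel[THEN iffD1, OF ne' s3] .
    then have cAB: "c * A * B = X\<^sup>2" using X0 by (simp add: field_simps)
    have p1: "0 \<le> c * A11 * B11" using nn c by simp
    have p2: "0 \<le> c * A22 * B22" using nn c by simp
    have "(c * A * B) * (c * A * B) = (c * c) * (A * A) * (B * B)" by (simp add: algebra_simps)
    also have "\<dots> \<le> (c * c) * (A11 * A22) * (B11 * B22)"
    proof -
      have "(A * A) * (B * B) \<le> (A11 * A22) * (B11 * B22)"
        by (rule mult_mono[OF CSA CSB]) (use nn in \<open>simp_all\<close>)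
      then show ?thesis using c by (simp add: mult.assoc)
    qed
    also have "\<dots> = (c * A11 * B11) * (c * A22 * B22)" by (simp add: algebra_simps)
    also have "\<dots> < X\<^sup>2 * X\<^sup>2"
      by (rule mult_strict_mono'[OF k1 k2 p1 p2])
    finally show False using cAB by simp
  qed
  show ?thesis
  proof (intro conjI impI)
    assume "dt 1 \<noteq> dt 2"
    then show "x 1 \<noteq> x 2" using key by blast
  next
    assume dne: "d 1 \<noteq> d 2"
    show "x 1 \<noteq> x 2"
    proof
      assume xe: "x 1 = x 2"
      have "dt 1 = dt 2" using key[OF xe] .
      moreover have "d 1 = c * (\<integral>t. t / (- x 1 * (1 + dt 1 * t)) \<partial>nu)" using hyp[OF insertI1] by (elim conjE) assumption
      moreover have "d 2 = c * (\<integral>t. t / (- x 2 * (1 + dt 2 * t)) \<partial>nu)" using hyp[OF insertI2[OF insertI1]] by (elim conjE) assumption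
      ultimately have "d 1 = d 2" using xe by simp
      then show False using dne by simp
    qed
  qed
qed

end
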